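(* Let $d\ge3$, $R_d=\{0,1,\dots,d-1\}$, and $r_d:\mathbb{Z}\to R_d$ the remainder modulo $d$. Define $\psi_d:R_d\times R_d\to R_d$, $\psi_d(k,i)=r_d(k+2i)$, and $\varphi_{d,\pm}:R_d\times R_d\to R_d$, $\varphi_{d,\pm}(k,i)=r_d(i\pm k)$. For $u\in R_d$ let $D^s_u=\{L^s_{k,i}\in\mathcal{L}^s: \psi_d(k,i)=u\}$ for $s=1,2$, and $D^0_{u,\pm}=\{L^0_{k,i}\in\mathcal{L}^0:\varphi_{d,\pm}(k,i)=u\}$. Then: (a) for every $i$, the restrictions of $\psi_d$ and of $\varphi_{d,\pm}$ to $R_d\times\{i\}$ are bijections onto $R_d$; (b) for every $k$, the restriction of $\varphi_{d,\pm}$ to $\{k\}\times R_d$ is a bijection onto $R_d$; (c) if $d$ is odd, for every $k$ the restriction of $\psi_d$ to $\{k\}\times R_d$ is a bijection onto $R_d$; (d) $\#\psi_d^{-1}(u)=d$ and $\#\varphi_{d,\pm}^{-1}(u)=d$ for all $u\in R_d$; (e) $D^0_{u,\pm}\subset\mathcal{L}^0$ and $D^s_u\subset\mathcal{L}^s$ ($s=1,2$) are families of $d$ pairwise disjoint lines.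
   Context: ${\rm F}_d\subset\mathbb{P}^3(\mathbb{C})$ is the surface $x^d-y^d-z^d+w^d=0$. Fix a primitive $d$-th root of unity $\eta$ and $v\in\mathbb{C}$ with $v^d=-1$. For $k,i\in R_d$ define the lines $L^0_{k,i}:\{y=\eta^i x,\ w=\eta^k z\}$, $L^1_{k,i}:\{x=\eta^{k+i}z,\ y=\eta^i w\}$, $L^2_{k,i}:\{x=v\eta^i w,\ y=v\eta^{k+i}z\}$, and $\mathcal{L}^s=\{L^s_{k,i}\}_{k,i\in R_d}$. *)

theory Defs
  imports Complex_Main
begin

text \<open>Points of P^3(C) are represented by their nonzero homogeneous coordinate
vectors (x,y,z,w); a line is represented by its (punctured) cone of nonzero
coordinate vectors. Since all defining equations are homogeneous, two lines
are disjoint in P^3 iff their cones are disjoint.\<close>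

type_synonym cpt = "complex \<times> complex \<times> complex \<times> complex"

definition rd :: "nat \<Rightarrow> int \<Rightarrow> nat" where
  "rd d n = nat (n mod int d)"

definition psi :: "nat \<Rightarrow> nat \<Rightarrow> nat \<Rightarrow> nat" where
  "psi d k i = rd d (int k + 2 * int i)"

text \<open>phi d e with e = 1 is phi_{d,+}, with e = -1 is phi_{d,-}.\<close>
definition phi :: "nat \<Rightarrow> int \<Rightarrow> nat \<Rightarrow> nat \<Rightarrow> nat" where
  "phi d e k i = rd d (int i + e * int k)"

definition L0 :: "complex \<Rightarrow> nat \<Rightarrow> nat \<Rightarrow> cpt set" where
  "L0 \<eta> k i = {(x,y,z,w). (x,y,z,w) \<noteq> (0,0,0,0) \<and> y = \<eta>^i * x \<and> w = \<eta>^k * z}"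

definition L1 :: "complex \<Rightarrow> nat \<Rightarrow> nat \<Rightarrow> cpt set" where
  "L1 \<eta> k i = {(x,y,z,w). (x,y,z,w) \<noteq> (0,0,0,0) \<and> x = \<eta>^(k+i) * z \<and> y = \<eta>^i * w}"

definition L2 :: "complex \<Rightarrow> complex \<Rightarrow> nat \<Rightarrow> nat \<Rightarrow> cpt set" where
  "L2 \<eta> v k i = {(x,y,z,w). (x,y,z,w) \<noteq> (0,0,0,0) \<and> x = v * \<eta>^i * w \<and> y = v * \<eta>^(k+i) * z}"

definition pairwise_disjoint_family :: "cpt set set \<Rightarrow> bool" where
  "pairwise_disjoint_family D \<longleftrightarrow> (\<forall>A\<in>D. \<forall>B\<in>D. A \<noteq> B \<longrightarrow> A \<inter> B = {})"

end

theory Submission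
  imports Defs
begin

lemma eta_pow_eq:
  fixes \<eta> :: complex
  assumes d: "d > 0" and r: "\<eta> ^ d = 1" and p: "\<forall>j. 0 < j \<and> j < d \<longrightarrow> \<eta> ^ j \<noteq> 1"
  shows "\<eta> ^ a = \<eta> ^ b \<longleftrightarrow> int a mod int d = int b mod int d"
proof -
  have red: "\<eta> ^ n = \<eta> ^ (n mod d)" for n
  proof -
    have "\<eta> ^ n = \<eta> ^ (d * (n div d) + n mod d)" by simp
    also have "\<dots> = (\<eta> ^ d) ^ (n div d) * \<eta> ^ (n mod d)" by (simp only: power_add power_mult)
    finally show ?thesis using r by simp
  qed
  have nz: "\<eta> \<noteq> 0" using r d by (auto simp: zero_power)
  have sm: "\<eta> ^ a' = \<eta> ^ b' \<Longrightarrow> a' < b' \<Longrightarrow> b' < d \<Longrightarrow> False" for a' b'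
  proof -
    assume e: "\<eta> ^ a' = \<eta> ^ b'" and lt: "a' < b'" and bd: "b' < d"
    have "\<eta> ^ b' = \<eta> ^ a' * \<eta> ^ (b' - a')" using lt by (simp add: power_add[symmetric])
    with e nz have "\<eta> ^ (b' - a') = 1" by simp
    with p lt bd show False by auto
  qed
  have "\<eta> ^ a = \<eta> ^ b \<longleftrightarrow> a mod d = b mod d"
  proof
    assume "\<eta> ^ a = \<eta> ^ b"
    hence e: "\<eta> ^ (a mod d) = \<eta> ^ (b mod d)" using red by metis
    show "a mod d = b mod d"
    proof (rule ccontr)
      assume "a mod d \<noteq> b mod d"
      hence "a mod d < b mod d \<or> b mod d < a mod d" by arith
      thus False using sm[OF e] sm[OF e[symmetric]] d by auto
    qed
  next
    assume "a mod d = b mod d" thus "\<eta> ^ a = \<eta> ^ b" using red by metis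
  qed
  thus ?thesis by (metis of_nat_eq_iff of_nat_mod)
qed

lemma rd_eq: "d > 0 \<Longrightarrow> rd d a = rd d b \<longleftrightarrow> int d dvd a - b"
  unfolding rd_def by (simp add: eq_nat_nat_iff mod_eq_dvd_iff)

lemma rd_lt: "d > 0 \<Longrightarrow> rd d a < d"
  unfolding rd_def by (simp add: nat_less_iff)

lemma small_eq: "(a::nat) < d \<Longrightarrow> b < d \<Longrightarrow> int d dvd int a - int b \<Longrightarrow> a = b"
proof -
  assume a: "a < d" "b < d" "int d dvd int a - int b"
  have "int a mod int d = int b mod int d" using a(3) by (simp add: mod_eq_dvd_iff)
  moreover have "int a mod int d = int a" using a(1) by simp
  moreover have "int b mod int d = int b" using a(2) by simp
  ultimately show "a = b" by simp
qed

lemma endo_bij: "inj_on f {..<d} \<Longrightarrow> (\<forall>k<d. f k < (d::nat)) \<Longrightarrow> bij_betw f {..<d} {..<d}"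
  unfolding bij_betw_def by (metis endo_inj_surj finite_lessThan image_subsetI lessThan_iff)

lemma psi_k_bij: "d > 0 \<Longrightarrow> bij_betw (\<lambda>k. psi d k i) {..<d} {..<d}"
proof (rule endo_bij)
  assume d: "d > 0"
  show "\<forall>k<d. psi d k i < d" using d by (simp add: psi_def rd_lt)
  show "inj_on (\<lambda>k. psi d k i) {..<d}"
  proof (rule inj_onI)
    fix k k' assume "k \<in> {..<d}" "k' \<in> {..<d}" "psi d k i = psi d k' i"
    thus "k = k'" using d unfolding psi_def rd_eq[OF d]
      by (auto intro: small_eq)
  qed
qed

lemma odd_dvd: "odd d \<Longrightarrow> int d dvd 2 * x \<Longrightarrow> int d dvd x"
proof -
  assume o: "odd d" and dv: "int d dvd 2 * x"
  then obtain m where m: "2 * x = int d * m" by (auto elim: dvdE)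
  have "even (int d * m)" using m by (metis dvd_triv_left)
  hence "even m" using o by simp
  then obtain n where "m = 2 * n" by (auto elim: evenE)
  with m have "x = int d * n" by simp
  thus ?thesis by simp
qed

lemma psi_i_bij: "d > 0 \<Longrightarrow> odd d \<Longrightarrow> bij_betw (\<lambda>i. psi d k i) {..<d} {..<d}"
proof (rule endo_bij)
  assume d: "d > 0" and o: "odd d"
  show "\<forall>j<d. psi d k j < d" using d by (simp add: psi_def rd_lt)
  show "inj_on (\<lambda>i. psi d k i) {..<d}"
  proof (rule inj_onI)
    fix i i' assume a: "i \<in> {..<d}" "i' \<in> {..<d}" "psi d k i = psi d k i'"
    hence "int d dvd 2 * (int i - int i')" unfolding psi_def rd_eq[OF d] by (simp add: algebra_simps)
    hence "int d dvd int i - int i'" using odd_dvd[OF o] by blast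
    thus "i = i'" using a small_eq by auto
  qed
qed

lemma e_cases: "(e::int) \<in> {1, -1} \<Longrightarrow> int d dvd e * x \<Longrightarrow> int d dvd x"
  by auto

lemma phi_k_bij: "d > 0 \<Longrightarrow> e \<in> {1,-1} \<Longrightarrow> bij_betw (\<lambda>k. phi d e k i) {..<d} {..<d}"
proof (rule endo_bij)
  assume d: "d > 0" and e: "e \<in> {1,-1}"
  show "\<forall>k<d. phi d e k i < d" using d by (simp add: phi_def rd_lt)
  show "inj_on (\<lambda>k. phi d e k i) {..<d}"
  proof (rule inj_onI)
    fix k k' assume a: "k \<in> {..<d}" "k' \<in> {..<d}" "phi d e k i = phi d e k' i"
    hence "int d dvd e * (int k - int k')" unfolding phi_def rd_eq[OF d] by (simp add: algebra_simps)
    hence "int d dvd int k - int k'" using e_cases[OF e] by blast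
    thus "k = k'" using a small_eq by auto
  qed
qed

lemma phi_i_bij: "d > 0 \<Longrightarrow> bij_betw (\<lambda>i. phi d e k i) {..<d} {..<d}"
proof (rule endo_bij)
  assume d: "d > 0"
  show "\<forall>i<d. phi d e k i < d" using d by (simp add: phi_def rd_lt)
  show "inj_on (\<lambda>i. phi d e k i) {..<d}"
  proof (rule inj_onI)
    fix i i' assume a: "i \<in> {..<d}" "i' \<in> {..<d}" "phi d e k i = phi d e k i'"
    hence "int d dvd int i - int i'" unfolding phi_def rd_eq[OF d] by (simp add: algebra_simps)
    thus "i = i'" using a small_eq by auto
  qed
qed

lemma count_bij:
  assumes b: "\<forall>i<d. bij_betw (\<lambda>k. g k i) {..<d} {..<(d::nat)}" and u: "u < d"
  shows "bij_betw snd {(k,i) \<in> {..<d}\<times>{..<d}. g k i = u} {..<d}"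
proof -
  define S where "S = {(k,i) \<in> {..<d}\<times>{..<d}. g k i = u}"
  have mem: "(k,i) \<in> S \<longleftrightarrow> k < d \<and> i < d \<and> g k i = u" for k i unfolding S_def by simp
  have "inj_on snd S"
  proof (rule inj_onI)
    fix p q assume a: "p \<in> S" "q \<in> S" "snd p = snd q"
    obtain k i where p: "p = (k,i)" by (cases p)
    obtain k' i' where q: "q = (k',i')" by (cases q)
    have pp: "k < d" "i < d" "g k i = u" using a(1) p mem by auto
    have qq: "k' < d" "i' = i" "g k' i' = u" using a q p mem by auto
    have "inj_on (\<lambda>k. g k i) {..<d}" using b pp(2) unfolding bij_betw_def by blast
    moreover have "g k i = g k' i" using pp qq by simp
    ultimately have "k = k'" using pp(1) qq(1) by (meson inj_onD lessThan_iff)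
    thus "p = q" using p q qq by simp
  qed
  moreover have "snd ` S = {..<d}"
  proof
    show "snd ` S \<subseteq> {..<d}" unfolding S_def by auto
    show "{..<d} \<subseteq> snd ` S"
    proof
      fix i assume i: "i \<in> {..<d}"
      then have "u \<in> (\<lambda>k. g k i) ` {..<d}" using b u unfolding bij_betw_def by auto
      then obtain k where "k < d" "g k i = u" by auto
      hence "(k,i) \<in> S" using i mem by auto
      thus "i \<in> snd ` S" by force
    qed
  qed
  ultimately show ?thesis unfolding bij_betw_def S_def by blast
qed

lemma fam:
  assumes b: "bij_betw snd S {..<(d::nat)}"
    and dj: "\<forall>p\<in>S. \<forall>q\<in>S. p \<noteq> q \<longrightarrow> L p \<inter> L q = {}"
    and ne: "\<forall>p\<in>S. L p \<noteq> {}"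
  shows "card (L ` S) = d \<and> pairwise_disjoint_family (L ` S)"
proof
  have "inj_on L S"
  proof (rule inj_onI)
    fix p q
    assume pq: "p \<in> S" "q \<in> S" "L p = L q"
    show "p = q"
    proof (rule ccontr)
      assume "p \<noteq> q"
      hence "L p \<inter> L q = {}" using dj pq by blast
      thus False using pq ne by simp
    qed
  qed
  hence "card (L ` S) = card S" by (rule card_image)
  also have "\<dots> = d" using bij_betw_same_card[OF b] by simp
  finally show "card (L ` S) = d" .
  show "pairwise_disjoint_family (L ` S)" unfolding pairwise_disjoint_family_def
  proof (intro ballI impI)
    fix A B assume A: "A \<in> L ` S" and B: "B \<in> L ` S" and ne: "A \<noteq> B"
    obtain p where p: "p \<in> S" "A = L p" using A by blast
    obtain q where q: "q \<in> S" "B = L q" using B by blast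
    have "p \<noteq> q" using p q ne by blast
    thus "A \<inter> B = {}" using dj p q by blast
  qed
qed

lemma fam2:
  assumes b: "\<forall>i<d. bij_betw (\<lambda>k. g k i) {..<d} {..<(d::nat)}" and u: "u < d"
    and dj: "\<And>k i k' i'. k<d \<Longrightarrow> i<d \<Longrightarrow> k'<d \<Longrightarrow> i'<d \<Longrightarrow> g k i = u \<Longrightarrow> g k' i' = u
        \<Longrightarrow> (k,i) \<noteq> (k',i') \<Longrightarrow> M k i \<inter> M k' i' = {}"
    and ne: "\<And>k i. M k i \<noteq> {}"
  shows "let D = {M k i | k i. k<d \<and> i<d \<and> g k i = u} in card D = d \<and> pairwise_disjoint_family D"
proof -
  define S where "S = {(k,i) \<in> {..<d}\<times>{..<d}. g k i = u}"
  have mem: "(k,i) \<in> S \<longleftrightarrow> k < d \<and> i < d \<and> g k i = u" for k i unfolding S_def by simp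
  have eq: "{M k i | k i. k<d \<and> i<d \<and> g k i = u} = (\<lambda>(k,i). M k i) ` S"
  proof
    show "{M k i | k i. k<d \<and> i<d \<and> g k i = u} \<subseteq> (\<lambda>(k,i). M k i) ` S"
    proof
      fix A assume "A \<in> {M k i | k i. k<d \<and> i<d \<and> g k i = u}"
      then obtain k i where "A = M k i" "k<d" "i<d" "g k i = u" by blast
      hence "(k,i) \<in> S" "A = (\<lambda>(k,i). M k i) (k,i)" using mem by auto
      thus "A \<in> (\<lambda>(k,i). M k i) ` S" by blast
    qed
    show "(\<lambda>(k,i). M k i) ` S \<subseteq> {M k i | k i. k<d \<and> i<d \<and> g k i = u}"
    proof
      fix A assume "A \<in> (\<lambda>(k,i). M k i) ` S"
      then obtain p where "p \<in> S" "A = (\<lambda>(k,i). M k i) p" by blast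
      then obtain k i where "(k,i) \<in> S" "A = M k i" by (cases p) auto
      thus "A \<in> {M k i | k i. k<d \<and> i<d \<and> g k i = u}" using mem by blast
    qed
  qed
  have bs: "bij_betw snd S {..<d}" unfolding S_def by (rule count_bij[OF b u])
  have dj2: "\<forall>p\<in>S. \<forall>q\<in>S. p \<noteq> q \<longrightarrow> (\<lambda>(k,i). M k i) p \<inter> (\<lambda>(k,i). M k i) q = {}"
  proof (intro ballI impI)
    fix p q assume p: "p \<in> S" and q: "q \<in> S" and pq: "p \<noteq> q"
    obtain k i where pe: "p = (k,i)" by (cases p)
    obtain k' i' where qe: "q = (k',i')" by (cases q)
    have "k<d" "i<d" "g k i = u" using p pe mem by auto
    moreover have "k'<d" "i'<d" "g k' i' = u" using q qe mem by auto
    ultimately have "M k i \<inter> M k' i' = {}" using dj pq pe qe by blast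
    thus "(\<lambda>(k,i). M k i) p \<inter> (\<lambda>(k,i). M k i) q = {}" using pe qe by simp
  qed
  have ne2: "\<forall>p\<in>S. (\<lambda>(k,i). M k i) p \<noteq> {}" using ne by auto
  show ?thesis unfolding Let_def eq using fam[OF bs dj2 ne2] .
qed

lemma eta_neq:
  fixes \<eta> :: complex
  assumes d: "d > 0" and r: "\<eta> ^ d = 1" and p: "\<forall>j. 0 < j \<and> j < d \<longrightarrow> \<eta> ^ j \<noteq> 1"
    and nd: "\<not> int d dvd int a - int b"
  shows "\<eta> ^ a \<noteq> \<eta> ^ b"
  using eta_pow_eq[OF d r p, of a b] nd by (simp add: mod_eq_dvd_iff)

lemma cancel0: "(a::complex) \<noteq> b \<Longrightarrow> a * x = b * x \<Longrightarrow> x = 0"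
  by simp

lemma L0_disj:
  assumes "(\<eta>::complex) ^ i \<noteq> \<eta> ^ i'" "\<eta> ^ k \<noteq> \<eta> ^ k'"
  shows "L0 \<eta> k i \<inter> L0 \<eta> k' i' = {}"
proof -
  { fix x y z w assume a: "(x,y,z,w) \<in> L0 \<eta> k i" "(x,y,z,w) \<in> L0 \<eta> k' i'"
    hence "\<eta>^i * x = \<eta>^i' * x" "\<eta>^k * z = \<eta>^k' * z" unfolding L0_def by auto
    hence "x = 0" "z = 0" using assms cancel0 by blast+
    hence False using a unfolding L0_def by auto }
  thus ?thesis by auto
qed

lemma L1_disj:
  assumes "(\<eta>::complex) ^ i \<noteq> \<eta> ^ i'" "\<eta> ^ (k+i) \<noteq> \<eta> ^ (k'+i')"
  shows "L1 \<eta> k i \<inter> L1 \<eta> k' i' = {}"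
proof -
  { fix x y z w assume a: "(x,y,z,w) \<in> L1 \<eta> k i" "(x,y,z,w) \<in> L1 \<eta> k' i'"
    hence "\<eta>^(k+i) * z = \<eta>^(k'+i') * z" "\<eta>^i * w = \<eta>^i' * w" unfolding L1_def by auto
    hence "z = 0" "w = 0" using assms cancel0 by blast+
    hence False using a unfolding L1_def by auto }
  thus ?thesis by auto
qed

lemma L2_mem: "(x,y,z,w) \<in> L2 \<eta> v k i \<longleftrightarrow> (x,y,z,w) \<noteq> (0,0,0,0) \<and> x = v * \<eta>^i * w \<and> y = v * \<eta>^(k+i) * z"
  unfolding L2_def mem_Collect_eq prod.case by (rule refl)

lemma L2_disj:
  assumes "(\<eta>::complex) ^ i \<noteq> \<eta> ^ i'" "\<eta> ^ (k+i) \<noteq> \<eta> ^ (k'+i')" "v \<noteq> 0"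
  shows "L2 \<eta> v k i \<inter> L2 \<eta> v k' i' = {}"
proof -
  { fix x y z w assume a: "(x,y,z,w) \<in> L2 \<eta> v k i" "(x,y,z,w) \<in> L2 \<eta> v k' i'"
    have a1': "(x,y,z,w) \<noteq> (0,0,0,0) \<and> x = v * \<eta>^i * w \<and> y = v * \<eta>^(k+i) * z"
      using L2_mem[THEN iffD1, OF a(1)] .
    have a2': "(x,y,z,w) \<noteq> (0,0,0,0) \<and> x = v * \<eta>^i' * w \<and> y = v * \<eta>^(k'+i') * z"
      using L2_mem[THEN iffD1, OF a(2)] .
    have a1: "x = v * \<eta>^i * w" "y = v * \<eta>^(k+i) * z" "(x,y,z,w) \<noteq> (0,0,0,0)" using a1' by blast+
    have a2: "x = v * \<eta>^i' * w" "y = v * \<eta>^(k'+i') * z" using a2' by blast+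
    have n1: "v * \<eta>^i \<noteq> v * \<eta>^i'" using assms(1,3) by simp
    have n2: "v * \<eta>^(k+i) \<noteq> v * \<eta>^(k'+i')" using assms(2,3) by simp
    have e1: "v * \<eta>^i * w = v * \<eta>^i' * w" using a1(1) a2(1) by metis
    have e2: "v * \<eta>^(k+i) * z = v * \<eta>^(k'+i') * z" using a1(2) a2(2) by metis
    have w0: "w = 0" using cancel0[OF n1 e1] .
    have z0: "z = 0" using cancel0[OF n2 e2] .
    have "x = 0" using a1(1) w0 by simp
    moreover have "y = 0" using a1(2) z0 by simp
    ultimately have False using a1(3) w0 z0 by simp }
  thus ?thesis by auto
qed

lemma L0_ne: "L0 \<eta> k i \<noteq> {}"
proof -
  have "(1, \<eta>^i, 0, 0) \<in> L0 \<eta> k i" unfolding L0_def by simp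
  thus ?thesis by blast
qed

lemma L1_ne: "L1 \<eta> k i \<noteq> {}"
proof -
  have "(\<eta>^(k+i), 0, 1, 0) \<in> L1 \<eta> k i" unfolding L1_def by simp
  thus ?thesis by blast
qed

lemma L2_ne: "L2 \<eta> v k i \<noteq> {}"
proof -
  have "(0, v * \<eta>^(k+i), 1, 0) \<in> L2 \<eta> v k i" unfolding L2_def by simp
  thus ?thesis by blast
qed

lemma psi_pair:
  assumes d: "d > 0" and "k<d" "i<d" "k'<d" "i'<d" "psi d k i = u" "psi d k' i' = u" "(k,i) \<noteq> (k',i')"
  shows "\<not> int d dvd int i - int i'" "\<not> int d dvd int (k+i) - int (k'+i')"
proof -
  have h: "int d dvd (int k + 2 * int i) - (int k' + 2 * int i')"
  proof -
    have "rd d (int k + 2 * int i) = rd d (int k' + 2 * int i')" using assms(6,7) unfolding psi_def by simp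
    thus ?thesis using rd_eq[OF d] by blast
  qed
  have ki: "i = i' \<Longrightarrow> k = k'"
  proof -
    assume "i = i'"
    hence "int d dvd int k - int k'" using h by simp
    thus "k = k'" using assms(2,4) small_eq by blast
  qed
  show 1: "\<not> int d dvd int i - int i'"
  proof
    assume "int d dvd int i - int i'"
    hence "i = i'" using assms(3,5) small_eq by blast
    thus False using ki assms(8) by simp
  qed
  show "\<not> int d dvd int (k+i) - int (k'+i')"
  proof
    assume "int d dvd int (k+i) - int (k'+i')"
    hence "int d dvd ((int k + 2 * int i) - (int k' + 2 * int i')) - (int (k+i) - int (k'+i'))"
      using h dvd_diff by blast
    moreover have "((int k + 2 * int i) - (int k' + 2 * int i')) - (int (k+i) - int (k'+i')) = int i - int i'"
      by simp
    ultimately show False using 1 by simp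
  qed
qed

lemma phi_pair:
  assumes d: "d > 0" and e: "e \<in> {1,-1}" and "k<d" "i<d" "k'<d" "i'<d" "phi d e k i = u" "phi d e k' i' = u" "(k,i) \<noteq> (k',i')"
  shows "\<not> int d dvd int i - int i'" "\<not> int d dvd int k - int k'"
proof -
  have ik: "i = i' \<Longrightarrow> k = k'"
  proof -
    assume ii: "i = i'"
    have inj: "inj_on (\<lambda>k. phi d e k i) {..<d}" using phi_k_bij[OF d e, of i] unfolding bij_betw_def by blast
    have "phi d e k i = phi d e k' i" using assms(7,8) ii by simp
    thus "k = k'" using inj_onD[OF inj] assms(3,5) by simp
  qed
  have ki: "k = k' \<Longrightarrow> i = i'"
  proof -
    assume kk: "k = k'"
    have inj: "inj_on (\<lambda>i. phi d e k i) {..<d}" using phi_i_bij[OF d, of e k] unfolding bij_betw_def by blast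
    have "phi d e k i = phi d e k i'" using assms(7,8) kk by simp
    thus "i = i'" using inj_onD[OF inj] assms(4,6) by simp
  qed
  show "\<not> int d dvd int i - int i'" using small_eq assms(4,6,9) ik by blast
  show "\<not> int d dvd int k - int k'" using small_eq assms(3,5,9) ki by blast
qed

theorem proposition2p2:
  fixes d :: nat and \<eta> v :: complex
  assumes d3: "d \<ge> 3"
    and eta_root: "\<eta> ^ d = 1"
    and eta_prim: "\<forall>j. 0 < j \<and> j < d \<longrightarrow> \<eta> ^ j \<noteq> 1"
    and v_def: "v ^ d = -1"
  shows
    \<comment> \<open>(a)\<close>
    "(\<forall>i<d. bij_betw (\<lambda>k. psi d k i) {..<d} {..<d}
            \<and> (\<forall>e\<in>{1, -1}. bij_betw (\<lambda>k. phi d e k i) {..<d} {..<d}))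
    \<comment> \<open>(b)\<close>
   \<and> (\<forall>k<d. \<forall>e\<in>{1, -1}. bij_betw (\<lambda>i. phi d e k i) {..<d} {..<d})
    \<comment> \<open>(c)\<close>
   \<and> (odd d \<longrightarrow> (\<forall>k<d. bij_betw (\<lambda>i. psi d k i) {..<d} {..<d}))
    \<comment> \<open>(d)\<close>
   \<and> (\<forall>u<d. card {(k,i) \<in> {..<d} \<times> {..<d}. psi d k i = u} = d
            \<and> (\<forall>e\<in>{1, -1}. card {(k,i) \<in> {..<d} \<times> {..<d}. phi d e k i = u} = d))
    \<comment> \<open>(e)\<close>
   \<and> (\<forall>u<d.
        (\<forall>e\<in>{1, -1}.
           let D = {L0 \<eta> k i | k i. k < d \<and> i < d \<and> phi d e k i = u}
           in card D = d \<and> pairwise_disjoint_family D)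
      \<and> (let D = {L1 \<eta> k i | k i. k < d \<and> i < d \<and> psi d k i = u}
         in card D = d \<and> pairwise_disjoint_family D)
      \<and> (let D = {L2 \<eta> v k i | k i. k < d \<and> i < d \<and> psi d k i = u}
         in card D = d \<and> pairwise_disjoint_family D))"
proof -
  have d: "d > 0" using d3 by simp
  have v0: "v \<noteq> 0" using v_def d by (auto simp: zero_power)
  have eneq: "\<not> int d dvd int a - int b \<Longrightarrow> \<eta> ^ a \<noteq> \<eta> ^ b" for a b
    using eta_neq[OF d eta_root eta_prim] by blast
  have A: "\<forall>i<d. bij_betw (\<lambda>k. psi d k i) {..<d} {..<d}" using psi_k_bij[OF d] by blast
  have Ae: "\<forall>e\<in>{1,-1}. \<forall>i<d. bij_betw (\<lambda>k. phi d e k i) {..<d} {..<d}" using phi_k_bij[OF d] by blast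
  have B: "\<forall>k<d. \<forall>e\<in>{1, -1}. bij_betw (\<lambda>i. phi d e k i) {..<d} {..<d}" using phi_i_bij[OF d] by blast
  have C: "odd d \<longrightarrow> (\<forall>k<d. bij_betw (\<lambda>i. psi d k i) {..<d} {..<d})" using psi_i_bij[OF d] by blast
  have D: "\<forall>u<d. card {(k,i) \<in> {..<d} \<times> {..<d}. psi d k i = u} = d
            \<and> (\<forall>e\<in>{1, -1}. card {(k,i) \<in> {..<d} \<times> {..<d}. phi d e k i = u} = d)"
  proof (intro allI impI conjI ballI)
    fix u assume u: "u < d"
    show "card {(k,i) \<in> {..<d} \<times> {..<d}. psi d k i = u} = d"
      using bij_betw_same_card[OF count_bij[OF A u]] by simp
    fix e :: int assume e: "e \<in> {1,-1}"
    show "card {(k,i) \<in> {..<d} \<times> {..<d}. phi d e k i = u} = d"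
      using bij_betw_same_card[OF count_bij[OF bspec[OF Ae e] u]] by simp
  qed
  have E: "\<forall>u<d.
        (\<forall>e\<in>{1, -1}.
           let D = {L0 \<eta> k i | k i. k < d \<and> i < d \<and> phi d e k i = u}
           in card D = d \<and> pairwise_disjoint_family D)
      \<and> (let D = {L1 \<eta> k i | k i. k < d \<and> i < d \<and> psi d k i = u}
         in card D = d \<and> pairwise_disjoint_family D)
      \<and> (let D = {L2 \<eta> v k i | k i. k < d \<and> i < d \<and> psi d k i = u}
         in card D = d \<and> pairwise_disjoint_family D)"
  proof (intro allI impI conjI ballI)
    fix u assume u: "u < d"
    show "let D = {L1 \<eta> k i | k i. k < d \<and> i < d \<and> psi d k i = u}
         in card D = d \<and> pairwise_disjoint_family D"
    proof (rule fam2[OF A u])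
      fix k i k' i' assume h: "k<d" "i<d" "k'<d" "i'<d" "psi d k i = u" "psi d k' i' = u" "(k,i) \<noteq> (k',i')"
      show "L1 \<eta> k i \<inter> L1 \<eta> k' i' = {}"
        using L1_disj eneq psi_pair[OF d h] by blast
    qed (rule L1_ne)
    show "let D = {L2 \<eta> v k i | k i. k < d \<and> i < d \<and> psi d k i = u}
         in card D = d \<and> pairwise_disjoint_family D"
    proof (rule fam2[OF A u])
      fix k i k' i' assume h: "k<d" "i<d" "k'<d" "i'<d" "psi d k i = u" "psi d k' i' = u" "(k,i) \<noteq> (k',i')"
      show "L2 \<eta> v k i \<inter> L2 \<eta> v k' i' = {}"
        using L2_disj[OF _ _ v0] eneq psi_pair[OF d h] by blast
    qed (rule L2_ne)
    fix e :: int assume e: "e \<in> {1,-1}"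
    show "let D = {L0 \<eta> k i | k i. k < d \<and> i < d \<and> phi d e k i = u}
           in card D = d \<and> pairwise_disjoint_family D"
    proof (rule fam2[OF bspec[OF Ae e] u])
      fix k i k' i' assume h: "k<d" "i<d" "k'<d" "i'<d" "phi d e k i = u" "phi d e k' i' = u" "(k,i) \<noteq> (k',i')"
      show "L0 \<eta> k i \<inter> L0 \<eta> k' i' = {}"
        using L0_disj eneq phi_pair[OF d e h] by blast
    qed (rule L0_ne)
  qed
  show ?thesis using A Ae B C D E by blast
qed

end
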